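(* In the setting below, $\mathbb E\,S(\widetilde a)\le(8+16C_G)\,\mathbb E\,S(a)$.
   Context: Let $n,N\in\mathbb N$, $I=\{1,\dots,n\}$, $J=\{1,\dots,N\}$, $G$ a nonempty finite set of maps $I\to J$, $\mathbb P$ the normalized counting measure on $G$ ($\mathbb P(E)=|E|/|G|$) and $\mathbb E$ its expectation. Assume there is a constant $C_G\ge1$ such that for all $i\in I,j\in J$, $\mathbb P(g(i)=j)=1/N$, and for all pairs $(i_1,j_1)\ne(i_2,j_2)$ in $I\times J$, $\mathbb P(g(i_1)=j_1,g(i_2)=j_2)\le C_G/N^2$. Fix an integer $1\le\ell\le n$ and a matrix $a\in\mathbb R^{n\times N}$ with non-negative entries, and let $h:\{1,\dots,nN\}\to I\times J$ be a bijection with $a(h(j))\ge a(h(j+1))$ for $1\le j<\ell N$ and $a(h(j))=0$ for $\ell N<j\le nN$ (for a matrix $b$, $b(i,j)=b_{ij}$). For such $a$, let $\widetilde a$ be the matrix with $\widetilde a(h(j))=\big(\frac1{\ell N}\sum_{i=1}^{\ell N}a(h(i))\big)\mathbb 1_{\{1,\dots,\ell N\}}(j)$ for $1\le j\le nN$. For a non-negative matrix $b$ and $g\in G$ let $S(b)(g)=\sum_{k=1}^{\ell}S_k(b)(g)$, where $S_k(b)(g)$ is the $k$-th largest (with multiplicity) of the numbers $b_{1g(1)},\dots,b_{ng(n)}$. *)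

theory Defs
  imports "HOL-Analysis.Analysis" "HOL-Library.FuncSet"
begin

text \<open>Maps I \<rightarrow> J with I = {1..n}, J = {1..N} are represented as extensional
functions nat \<Rightarrow> nat (value undefined outside {1..n}).\<close>

definition prob_G :: "(nat \<Rightarrow> nat) set \<Rightarrow> ((nat \<Rightarrow> nat) \<Rightarrow> bool) \<Rightarrow> real" where
  "prob_G G E = real (card {g \<in> G. E g}) / real (card G)"

definition expect_G :: "(nat \<Rightarrow> nat) set \<Rightarrow> ((nat \<Rightarrow> nat) \<Rightarrow> real) \<Rightarrow> real" where
  "expect_G G X = (\<Sum>g\<in>G. X g) / real (card G)"

text \<open>The values b_{1 g(1)}, ..., b_{n g(n)} sorted in non-increasing order
(with multiplicity); the k-th entry (k starting from 1) is S_k(b)(g).\<close>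
definition sorted_vals :: "nat \<Rightarrow> (nat \<Rightarrow> nat \<Rightarrow> real) \<Rightarrow> (nat \<Rightarrow> nat) \<Rightarrow> real list" where
  "sorted_vals n b g = rev (sort (map (\<lambda>i. b i (g i)) [1..<n+1]))"

definition S_k :: "nat \<Rightarrow> nat \<Rightarrow> (nat \<Rightarrow> nat \<Rightarrow> real) \<Rightarrow> (nat \<Rightarrow> nat) \<Rightarrow> real" where
  "S_k n k b g = sorted_vals n b g ! (k - 1)"

definition S_top :: "nat \<Rightarrow> nat \<Rightarrow> (nat \<Rightarrow> nat \<Rightarrow> real) \<Rightarrow> (nat \<Rightarrow> nat) \<Rightarrow> real" where
  "S_top n l b g = (\<Sum>k=1..l. S_k n k b g)"

definition a_tilde :: "nat \<Rightarrow> nat \<Rightarrow> (nat \<Rightarrow> nat \<times> nat) \<Rightarrow> (nat \<Rightarrow> nat \<Rightarrow> real) \<Rightarrow> nat \<Rightarrow> nat \<Rightarrow> real" where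
  "a_tilde l N h a i j =
     (if (i, j) \<in> h ` {1..l*N}
      then (\<Sum>m=1..l*N. case_prod a (h m)) / real (l*N) else 0)"

end

theory Submission imports Defs begin

lemma sum_mset_le_take:
  fixes f :: "real list"
  assumes "sorted_wrt (\<ge>) f" "M \<subseteq># mset f"
  shows "sum_mset M \<le> sum_list (take (size M) f)"
  using assms
proof (induction f arbitrary: M)
  case Nil
  then show ?case by simp
next
  case (Cons x f)
  show ?case
  proof (cases "x \<in># M")
    case True
    define M' where "M' = M - {#x#}"
    have M: "M = add_mset x M'" using True M'_def by simp
    have "M' \<subseteq># mset f" using Cons.prems(2) M by simp
    then have "sum_mset M' \<le> sum_list (take (size M') f)"
      using Cons by simp
    then show ?thesis using M by simp
  next
    case False
    show ?thesis
    proof (cases "M = {#}")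
      case True then show ?thesis by simp
    next
      case ne: False
      then obtain y where y: "y \<in># M" by (meson multiset_nonemptyE)
      define M' where "M' = M - {#y#}"
      have M: "M = add_mset y M'" using y M'_def by simp
      have "M \<subseteq># mset f" using Cons.prems(2) False
        by (simp add: inter_add_left1 subset_mset.inf.absorb_iff2)
      then have "M' \<subseteq># mset f" unfolding M'_def
        by (meson diff_subset_eq_self subset_mset.trans)
      then have "sum_mset M' \<le> sum_list (take (size M') f)"
        using Cons by simp
      moreover have "y \<le> x" using y \<open>M \<subseteq># mset f\<close> Cons.prems(1)
        by (metis mset_subset_eqD set_mset_mset sorted_wrt.simps(2))
      ultimately show ?thesis using M by simp
    qed
  qed
qed

lemma S_top_as_take:
  assumes "l \<le> n"
  shows "S_top n l b g = sum_list (take l (sorted_vals n b g))"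
proof -
  have len: "length (sorted_vals n b g) = n" by (simp add: sorted_vals_def)
  have "S_top n l b g = (\<Sum>k=1..l. sorted_vals n b g ! (k-1))"
    by (simp add: S_top_def S_k_def)
  also have "\<dots> = (\<Sum>k=0..<l. sorted_vals n b g ! k)"
  proof -
    have "(\<Sum>k=1..l. sorted_vals n b g ! (k-1)) = (\<Sum>k=Suc 0..<Suc l. sorted_vals n b g ! (k-1))"
      by (simp add: atLeastLessThanSuc_atLeastAtMost)
    also have "\<dots> = (\<Sum>k=0..<l. sorted_vals n b g ! k)"
      unfolding sum.shift_bounds_Suc_ivl by simp
    finally show ?thesis .
  qed
  also have "\<dots> = sum_list (take l (sorted_vals n b g))"
    using assms len by (simp add: sum_list_sum_nth min_def)
  finally show ?thesis .
qed

lemma set_sorted_vals: "set (sorted_vals n b g) = (\<lambda>i. b i (g i)) ` {1..n}"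
  by (auto simp: sorted_vals_def)

lemma S_top_ge_subset:
  assumes "P \<subseteq> {1..n}" "card P \<le> l" "l \<le> n"
    and nn: "\<And>i. i \<in> {1..n} \<Longrightarrow> b i (g i) \<ge> 0"
  shows "(\<Sum>i\<in>P. b i (g i)) \<le> S_top n l b g"
proof -
  define v where "v = (\<lambda>i. b i (g i))"
  define f where "f = sorted_vals n b g"
  have fin: "finite P" using assms(1) finite_subset by blast
  have sw: "sorted_wrt (\<ge>) f"
    by (simp add: f_def sorted_vals_def sorted_wrt_rev)
  have mf: "mset f = image_mset v (mset_set {1..n})"
  proof -
    have e: "{1..<n+1} = {1..n}" by auto
    show ?thesis unfolding f_def sorted_vals_def v_def
      by (simp only: mset_rev mset_sort mset_map mset_upt e)
  qed
  define M where "M = image_mset v (mset_set P)"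
  have "M \<subseteq># mset f" unfolding M_def mf
    by (rule image_mset_subseteq_mono) (use assms(1) in \<open>simp add: subset_imp_msubset_mset_set\<close>)
  then have "sum_mset M \<le> sum_list (take (size M) f)"
    using sum_mset_le_take sw by blast
  moreover have "sum_mset M = (\<Sum>i\<in>P. v i)" by (simp add: M_def sum_unfold_sum_mset)
  moreover have "size M = card P" by (simp add: M_def)
  moreover have "sum_list (take (card P) f) \<le> sum_list (take l f)"
  proof -
    have "take l f = take (card P) f @ drop (card P) (take l f)"
      using assms(2) by (metis append_take_drop_id min.absorb1 take_take)
    moreover have "0 \<le> sum_list (drop (card P) (take l f))"
    proof (rule sum_list_nonneg)
      fix x assume "x \<in> set (drop (card P) (take l f))"
      then have "x \<in> set f" by (meson in_set_dropD in_set_takeD)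
      then show "0 \<le> x" using nn by (auto simp: f_def set_sorted_vals)
    qed
    ultimately show ?thesis by (metis le_add_same_cancel1 sum_list_append)
  qed
  ultimately show ?thesis
    using S_top_as_take[OF assms(3)] by (simp add: v_def f_def)
qed

lemma S_top_le_bound:
  assumes "l \<le> n" and ub: "\<And>i. i \<in> {1..n} \<Longrightarrow> b i (g i) \<le> A"
  shows "S_top n l b g \<le> real l * A"
proof -
  have "S_top n l b g = (\<Sum>k=1..l. S_k n k b g)" by (simp add: S_top_def)
  also have "\<dots> \<le> (\<Sum>k=1..l. A)"
  proof (rule sum_mono)
    fix k assume k: "k \<in> {1..l}"
    have "sorted_vals n b g ! (k-1) \<in> set (sorted_vals n b g)"
      using k assms(1) by (intro nth_mem) (auto simp: sorted_vals_def)
    then show "S_k n k b g \<le> A" using ub by (auto simp: S_k_def set_sorted_vals)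
  qed
  also have "\<dots> = real l * A" by simp
  finally show ?thesis .
qed

lemma quad_le_min:
  fixes X L lam :: real
  assumes "X \<ge> 0" "L \<ge> 1" "0 < lam" "lam \<le> 1"
  shows "lam * X - lam^2 * X^2 / (4 * L) \<le> min L X"
proof -
  have "lam * X - lam^2 * X^2 / (4 * L) \<le> L"
  proof -
    have "0 \<le> (lam * X - 2 * L)^2 / (4 * L)" using assms by simp
    also have "(lam * X - 2 * L)^2 / (4 * L) = lam^2 * X^2 / (4 * L) - lam * X + L"
      using assms by (simp add: field_simps power2_eq_square)
    finally show ?thesis by simp
  qed
  moreover have "lam * X - lam^2 * X^2 / (4 * L) \<le> X"
  proof -
    have "lam * X \<le> X" using assms by (simp add: mult_left_le_one_le)
    moreover have "0 \<le> lam^2 * X^2 / (4 * L)" using assms by simp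
    ultimately show ?thesis by linarith
  qed
  ultimately show ?thesis by simp
qed

lemma term_bound:
  fixes u L C :: real
  assumes "0 \<le> u" "u \<le> L" "L \<ge> 1" "C \<ge> 1"
  shows "u / (1 + C) \<le> (2/(1+C)) * u - (2/(1+C))^2 / (4 * L) * (u + C * u^2)"
proof -
  define lam where "lam = 2/(1+C)"
  have lp: "lam > 0" using assms by (simp add: lam_def)
  have "u + C * u^2 \<le> L * (u + C * u)"
  proof -
    have "u \<le> L * u" using assms by (simp add: mult_le_cancel_right1)
    moreover have "C * u^2 \<le> L * (C * u)"
      using assms by (simp add: power2_eq_square mult_right_mono mult_left_mono mult.assoc mult.left_commute)
    ultimately show ?thesis by (simp add: distrib_left)
  qed
  then have "lam^2 / (4 * L) * (u + C * u^2) \<le> lam^2 / (4 * L) * (L * (u + C * u))"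
    using assms by (intro mult_left_mono) auto
  also have "\<dots> = lam^2 / 4 * (u + C * u)" using assms by (simp add: field_simps)
  also have "\<dots> = lam * u - u / (1 + C)"
  proof -
    have nz: "1 + C \<noteq> 0" using assms by simp
    have "(2/(1+C))^2 / 4 = 1/(1+C)^2" by (simp add: power_divide)
    moreover have "u + C * u = u * (1+C)" by (simp add: algebra_simps)
    ultimately have "(2/(1+C))^2 / 4 * (u + C * u) = u * (1+C) / (1+C)^2" by simp
    also have "\<dots> = u / (1+C)" using nz by (simp add: power2_eq_square)
    also have "\<dots> = 2/(1+C) * u - u / (1 + C)" by (simp add: field_simps)
    finally show ?thesis unfolding lam_def .
  qed
  finally show ?thesis unfolding lam_def[symmetric] by linarith
qed

theorem lemma3p5:
  fixes n N l :: nat and G :: "(nat \<Rightarrow> nat) set" and C_G :: real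
    and a :: "nat \<Rightarrow> nat \<Rightarrow> real" and h :: "nat \<Rightarrow> nat \<times> nat"
  assumes n_pos: "n \<ge> 1" and N_pos: "N \<ge> 1"
    and G_maps: "G \<subseteq> {1..n} \<rightarrow>\<^sub>E {1..N}"
    and G_fin: "finite G" and G_ne: "G \<noteq> {}"
    and C_G: "C_G \<ge> 1"
    and unif: "\<And>i j. i \<in> {1..n} \<Longrightarrow> j \<in> {1..N} \<Longrightarrow> prob_G G (\<lambda>g. g i = j) = 1 / real N"
    and pair: "\<And>i1 j1 i2 j2. i1 \<in> {1..n} \<Longrightarrow> j1 \<in> {1..N} \<Longrightarrow> i2 \<in> {1..n} \<Longrightarrow> j2 \<in> {1..N}
                 \<Longrightarrow> (i1, j1) \<noteq> (i2, j2)
                 \<Longrightarrow> prob_G G (\<lambda>g. g i1 = j1 \<and> g i2 = j2) \<le> C_G / (real N)^2"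
    and l: "1 \<le> l" "l \<le> n"
    and a_nonneg: "\<And>i j. i \<in> {1..n} \<Longrightarrow> j \<in> {1..N} \<Longrightarrow> a i j \<ge> 0"
    and h_bij: "bij_betw h {1..n*N} ({1..n} \<times> {1..N})"
    and h_mono: "\<And>j. 1 \<le> j \<Longrightarrow> j < l*N \<Longrightarrow> case_prod a (h j) \<ge> case_prod a (h (j+1))"
    and h_zero: "\<And>j. l*N < j \<Longrightarrow> j \<le> n*N \<Longrightarrow> case_prod a (h j) = 0"
  shows "expect_G G (S_top n l (a_tilde l N h a)) \<le> (8 + 16 * C_G) * expect_G G (S_top n l a)"
proof -
  define K where "K = l * N"
  define x where "x = (\<lambda>m. case_prod a (h m))"
  define d where "d = (\<lambda>k. x k - (if k < K then x (k+1) else 0))"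
  define Ms where "Ms = (\<lambda>k (g::nat\<Rightarrow>nat). {m \<in> {1..k}. g (fst (h m)) = snd (h m)})"
  define cG where "cG = real (card G)"
  define lam where "lam = 2 / (1 + C_G)"
  have cGpos: "cG > 0" using G_fin G_ne by (simp add: cG_def card_gt_0_iff)
  have Npos: "real N > 0" using N_pos by simp
  have KnN: "K \<le> n * N" using l by (simp add: K_def)
  have h_in: "\<And>m. m \<in> {1..n*N} \<Longrightarrow> h m \<in> {1..n} \<times> {1..N}"
    using h_bij bij_betwE by blast
  have h_inj: "inj_on h {1..n*N}" using h_bij bij_betw_def by blast
  have x_nn: "\<And>m. m \<in> {1..n*N} \<Longrightarrow> x m \<ge> 0"
    using h_in a_nonneg by (force simp: x_def case_prod_beta mem_Times_iff)
  have d_nn: "\<And>k. k \<in> {1..K} \<Longrightarrow> d k \<ge> 0"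
  proof -
    fix k assume k: "k \<in> {1..K}"
    show "d k \<ge> 0"
    proof (cases "k < K")
      case True
      then show ?thesis using h_mono[of k] k by (simp add: d_def x_def K_def)
    next
      case False
      then show ?thesis using x_nn[of k] k KnN by (simp add: d_def)
    qed
  qed
  have tele: "\<And>m. m \<in> {1..K} \<Longrightarrow> (\<Sum>k\<in>{m..K}. d k) = x m"
  proof -
    have "\<forall>m. K - m = t \<longrightarrow> m \<in> {1..K} \<longrightarrow> (\<Sum>k\<in>{m..K}. d k) = x m" for t
    proof (induction t)
      case 0
      then show ?case by (auto simp: d_def)
    next
      case (Suc t)
      show ?case
      proof (intro allI impI)
        fix m assume m: "K - m = Suc t" "m \<in> {1..K}"
        have e: "{m..K} = insert m {Suc m..K}" using m by auto
        have "(\<Sum>k\<in>{m..K}. d k) = d m + (\<Sum>k\<in>{Suc m..K}. d k)" unfolding e by simp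
        also have "(\<Sum>k\<in>{Suc m..K}. d k) = x (Suc m)" using Suc.IH m by auto
        finally show "(\<Sum>k\<in>{m..K}. d k) = x m" using m by (simp add: d_def)
      qed
    qed
    then show "\<And>m. m \<in> {1..K} \<Longrightarrow> (\<Sum>k\<in>{m..K}. d k) = x m" by blast
  qed
  have gmap: "\<And>g i. g \<in> G \<Longrightarrow> i \<in> {1..n} \<Longrightarrow> g i \<in> {1..N}"
    using G_maps by (auto simp: PiE_iff)
  have Ms_sub: "\<And>k g. Ms k g \<subseteq> {1..k}" by (auto simp: Ms_def)
  have Ms_fin: "\<And>k g. finite (Ms k g)" by (meson Ms_sub finite_atLeastAtMost finite_subset)
  have det: "\<And>g. g \<in> G \<Longrightarrow> (\<Sum>k\<in>{1..K}. d k * min (real l) (real (card (Ms k g)))) \<le> S_top n l a g"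
  proof -
    fix g assume g: "g \<in> G"
    define R where "R = {k \<in> {0..K}. card (Ms k g) \<le> l}"
    have Ms0: "Ms 0 g = {}" by (simp add: Ms_def)
    have finR: "finite R" by (simp add: R_def)
    have R0: "0 \<in> R" using Ms0 by (simp add: R_def)
    define r where "r = Max R"
    have rR: "r \<in> R" using finR R0 r_def Max_in by blast
    have rmax: "\<And>k. k \<in> R \<Longrightarrow> k \<le> r" using finR r_def by simp
    define Q where "Q = Ms r g"
    have rK: "r \<le> K" using rR by (simp add: R_def)
    have Q_sub: "Q \<subseteq> {1..K}" using Ms_sub[of r g] rK Q_def by auto
    have Q_sub_r: "Q \<subseteq> {1..r}" using Ms_sub[of r g] Q_def by auto
    have finQ: "finite Q" using Ms_fin Q_def by simp
    have cardQ: "card Q \<le> l" using rR by (simp add: R_def Q_def)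
    have injQ: "inj_on (\<lambda>m. fst (h m)) Q"
    proof (rule inj_onI)
      fix m m' assume m: "m \<in> Q" and m': "m' \<in> Q" and eq: "fst (h m) = fst (h m')"
      have "snd (h m) = snd (h m')" using m m' eq by (simp add: Q_def Ms_def)
      then have "h m = h m'" using eq prod_eq_iff by blast
      moreover have "m \<in> {1..n*N}" "m' \<in> {1..n*N}" using m m' Q_sub KnN by auto
      ultimately show "m = m'" using h_inj inj_onD by metis
    qed
    define P where "P = (\<lambda>m. fst (h m)) ` Q"
    have P_sub: "P \<subseteq> {1..n}"
    proof
      fix i assume "i \<in> P"
      then obtain m where m: "m \<in> Q" "i = fst (h m)" by (auto simp: P_def)
      then have "m \<in> {1..n*N}" using Q_sub KnN by auto
      then show "i \<in> {1..n}" using h_in m by (auto simp: mem_Times_iff)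
    qed
    have cardP: "card P \<le> l" using cardQ card_image[OF injQ] P_def by simp
    have S_ge: "(\<Sum>i\<in>P. a i (g i)) \<le> S_top n l a g"
      by (rule S_top_ge_subset[OF P_sub cardP l(2)]) (use gmap g a_nonneg in auto)
    have "(\<Sum>i\<in>P. a i (g i)) = (\<Sum>m\<in>Q. a (fst (h m)) (g (fst (h m))))"
      unfolding P_def by (simp add: sum.reindex[OF injQ])
    also have "\<dots> = (\<Sum>m\<in>Q. x m)"
      by (rule sum.cong) (auto simp: x_def Q_def Ms_def case_prod_beta)
    also have "\<dots> = (\<Sum>m\<in>Q. \<Sum>k\<in>{1..K}. if m \<le> k then d k else 0)"
    proof (rule sum.cong[OF refl])
      fix m assume "m \<in> Q"
      then have m: "m \<in> {1..K}" using Q_sub by auto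
      have "(\<Sum>k\<in>{1..K}. if m \<le> k then d k else 0) = (\<Sum>k\<in>{k\<in>{1..K}. m \<le> k}. d k)"
        using sum.inter_filter[of "{1..K}" d "\<lambda>k. m \<le> k"] by simp
      also have "{k\<in>{1..K}. m \<le> k} = {m..K}" using m by auto
      finally show "x m = (\<Sum>k\<in>{1..K}. if m \<le> k then d k else 0)" using tele m by simp
    qed
    also have "\<dots> = (\<Sum>k\<in>{1..K}. d k * real (card {m\<in>Q. m \<le> k}))"
    proof -
      have "(\<Sum>m\<in>Q. \<Sum>k\<in>{1..K}. if m \<le> k then d k else 0) = (\<Sum>k\<in>{1..K}. \<Sum>m\<in>Q. if m \<le> k then d k else 0)"
        by (rule sum.swap)
      also have "\<dots> = (\<Sum>k\<in>{1..K}. d k * real (card {m\<in>Q. m \<le> k}))"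
      proof (rule sum.cong[OF refl])
        fix k
        have "(\<Sum>m\<in>Q. if m \<le> k then d k else 0) = (\<Sum>m\<in>{m\<in>Q. m \<le> k}. d k)"
          using finQ sum.inter_filter[of Q "\<lambda>_. d k" "\<lambda>m. m \<le> k"] by simp
        then show "(\<Sum>m\<in>Q. if m \<le> k then d k else 0) = d k * real (card {m\<in>Q. m \<le> k})"
          by (simp add: mult.commute)
      qed
      finally show ?thesis .
    qed
    finally have eqP: "(\<Sum>i\<in>P. a i (g i)) = (\<Sum>k\<in>{1..K}. d k * real (card {m\<in>Q. m \<le> k}))" .
    have key: "min (real l) (real (card (Ms k g))) \<le> real (card {m\<in>Q. m \<le> k})" if k: "k \<in> {1..K}" for k
    proof (cases "k \<le> r")
      case True
      then have "{m\<in>Q. m \<le> k} = Ms k g" by (auto simp: Q_def Ms_def)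
      then show ?thesis by simp
    next
      case False
      then have eqQ: "{m\<in>Q. m \<le> k} = Q" using Q_sub_r by auto
      have "r + 1 \<notin> R" using rmax by fastforce
      moreover have "r + 1 \<in> {0..K}" using False k by auto
      ultimately have c1: "card (Ms (r+1) g) > l" by (simp add: R_def)
      have "Ms (r+1) g \<subseteq> insert (r+1) Q" by (auto simp: Q_def Ms_def)
      then have "card (Ms (r+1) g) \<le> card (insert (r+1) Q)" using finQ by (intro card_mono) auto
      also have "\<dots> \<le> card Q + 1" using finQ by (simp add: card_insert_if)
      finally have "l \<le> card Q" using c1 by simp
      then show ?thesis using eqQ by simp
    qed
    have "(\<Sum>k\<in>{1..K}. d k * min (real l) (real (card (Ms k g)))) \<le> (\<Sum>k\<in>{1..K}. d k * real (card {m\<in>Q. m \<le> k}))"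
      by (rule sum_mono) (use key d_nn in \<open>auto intro: mult_left_mono\<close>)
    then show "(\<Sum>k\<in>{1..K}. d k * min (real l) (real (card (Ms k g)))) \<le> S_top n l a g"
      using eqP S_ge by linarith
  qed

  have cnt: "\<And>i j. i \<in> {1..n} \<Longrightarrow> j \<in> {1..N} \<Longrightarrow> real (card {g\<in>G. g i = j}) = cG / real N"
  proof -
    fix i j assume ij: "i \<in> {1..n}" "j \<in> {1..N}"
    have "real (card {g\<in>G. g i = j}) / cG = 1 / real N" using unif[OF ij] by (simp add: prob_G_def cG_def)
    then show "real (card {g\<in>G. g i = j}) = cG / real N" using cGpos Npos by (simp add: field_simps)
  qed
  have cnt2: "\<And>i1 j1 i2 j2. i1 \<in> {1..n} \<Longrightarrow> j1 \<in> {1..N} \<Longrightarrow> i2 \<in> {1..n} \<Longrightarrow> j2 \<in> {1..N}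
                 \<Longrightarrow> (i1, j1) \<noteq> (i2, j2)
                 \<Longrightarrow> real (card {g\<in>G. g i1 = j1 \<and> g i2 = j2}) \<le> cG * C_G / (real N)^2"
  proof -
    fix i1 j1 i2 j2 assume as: "i1 \<in> {1..n}" "j1 \<in> {1..N}" "i2 \<in> {1..n}" "j2 \<in> {1..N}" "(i1, j1) \<noteq> (i2, j2)"
    have "real (card {g\<in>G. g i1 = j1 \<and> g i2 = j2}) / cG \<le> C_G / (real N)^2"
      using pair[OF as] by (simp add: prob_G_def cG_def)
    then have "real (card {g\<in>G. g i1 = j1 \<and> g i2 = j2}) \<le> C_G / (real N)^2 * cG"
      using cGpos by (simp add: pos_divide_le_eq)
    then show "real (card {g\<in>G. g i1 = j1 \<and> g i2 = j2}) \<le> cG * C_G / (real N)^2" by (simp add: mult.commute)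
  qed
  define ind where "ind = (\<lambda>g m. if g (fst (h m)) = snd (h m) then (1::real) else 0)"
  have c_ind: "real (card (Ms k g)) = (\<Sum>m\<in>{1..k}. ind g m)" for k g
    using sum.inter_filter[of "{1..k}" "\<lambda>_. (1::real)" "\<lambda>m. g (fst (h m)) = snd (h m)"]
    by (simp add: Ms_def ind_def)
  have X1: "\<And>k. k \<le> K \<Longrightarrow> (\<Sum>g\<in>G. real (card (Ms k g))) = cG * real k / real N"
  proof -
    fix k assume k: "k \<le> K"
    have "(\<Sum>g\<in>G. real (card (Ms k g))) = (\<Sum>m\<in>{1..k}. \<Sum>g\<in>G. ind g m)"
      unfolding c_ind by (rule sum.swap)
    also have "\<dots> = (\<Sum>m\<in>{1..k}. cG / real N)"
    proof (rule sum.cong[OF refl])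
      fix m assume m: "m \<in> {1..k}"
      then have "h m \<in> {1..n} \<times> {1..N}" using h_in k KnN by auto
      then have "real (card {g\<in>G. g (fst (h m)) = snd (h m)}) = cG / real N"
        using cnt by (auto simp: mem_Times_iff)
      then show "(\<Sum>g\<in>G. ind g m) = cG / real N"
        using G_fin sum.inter_filter[of G "\<lambda>_. (1::real)" "\<lambda>g. g (fst (h m)) = snd (h m)"]
        by (simp add: ind_def)
    qed
    also have "\<dots> = cG * real k / real N" by simp
    finally show "(\<Sum>g\<in>G. real (card (Ms k g))) = cG * real k / real N" .
  qed
  have X2: "\<And>k. k \<le> K \<Longrightarrow> (\<Sum>g\<in>G. (real (card (Ms k g)))^2) \<le> cG * (real k / real N + C_G * (real k / real N)^2)"
  proof -
    fix k assume k: "k \<le> K"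
    have sq: "(real (card (Ms k g)))^2 = (\<Sum>m\<in>{1..k}. \<Sum>m'\<in>{1..k}. ind g m * ind g m')" for g
      unfolding c_ind power2_eq_square by (rule sum_product)
    have "(\<Sum>g\<in>G. (real (card (Ms k g)))^2) = (\<Sum>m\<in>{1..k}. \<Sum>m'\<in>{1..k}. \<Sum>g\<in>G. ind g m * ind g m')"
    proof -
      have "(\<Sum>g\<in>G. (real (card (Ms k g)))^2) = (\<Sum>m\<in>{1..k}. \<Sum>g\<in>G. \<Sum>m'\<in>{1..k}. ind g m * ind g m')"
        unfolding sq by (rule sum.swap)
      also have "\<dots> = (\<Sum>m\<in>{1..k}. \<Sum>m'\<in>{1..k}. \<Sum>g\<in>G. ind g m * ind g m')"
        by (rule sum.cong[OF refl], rule sum.swap)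
      finally show ?thesis .
    qed
    also have "\<dots> \<le> (\<Sum>m\<in>{1..k}. \<Sum>m'\<in>{1..k}. (if m = m' then cG / real N else 0) + cG * C_G / (real N)^2)"
    proof (intro sum_mono)
      fix m m' assume m: "m \<in> {1..k}" and m': "m' \<in> {1..k}"
      have hm: "h m \<in> {1..n} \<times> {1..N}" using m h_in k KnN by auto
      have hm': "h m' \<in> {1..n} \<times> {1..N}" using m' h_in k KnN by auto
      have e0: "(\<Sum>g\<in>G. ind g m * ind g m') = (\<Sum>g\<in>G. if g (fst (h m)) = snd (h m) \<and> g (fst (h m')) = snd (h m') then 1 else 0)"
        by (rule sum.cong) (auto simp: ind_def)
      have e: "(\<Sum>g\<in>G. ind g m * ind g m') = real (card {g\<in>G. g (fst (h m)) = snd (h m) \<and> g (fst (h m')) = snd (h m')})"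
        unfolding e0
        using G_fin sum.inter_filter[of G "\<lambda>_. (1::real)" "\<lambda>g. g (fst (h m)) = snd (h m) \<and> g (fst (h m')) = snd (h m')"]
        by simp
      have Cnn: "0 \<le> cG * C_G / (real N)^2" using cGpos C_G by simp
      show "(\<Sum>g\<in>G. ind g m * ind g m') \<le> (if m = m' then cG / real N else 0) + cG * C_G / (real N)^2"
      proof (cases "m = m'")
        case True
        then have "(\<Sum>g\<in>G. ind g m * ind g m') = cG / real N"
          unfolding e using cnt hm by (auto simp: mem_Times_iff)
        then show ?thesis using True Cnn by simp
      next
        case False
        have "h m \<noteq> h m'" using False m m' k KnN h_inj inj_onD
          by (metis atLeastAtMost_iff order_trans)
        then have neq: "(fst (h m), snd (h m)) \<noteq> (fst (h m'), snd (h m'))" by simp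
        have "(\<Sum>g\<in>G. ind g m * ind g m') \<le> cG * C_G / (real N)^2"
          unfolding e by (rule cnt2[OF _ _ _ _ neq]) (use hm hm' in \<open>auto simp: mem_Times_iff\<close>)
        then show ?thesis using False by simp
      qed
    qed
    also have "\<dots> = (\<Sum>m\<in>{1..k}. cG / real N + real k * (cG * C_G / (real N)^2))"
    proof (rule sum.cong[OF refl])
      fix m assume m: "m \<in> {1..k}"
      show "(\<Sum>m'\<in>{1..k}. (if m = m' then cG / real N else 0) + cG * C_G / (real N)^2)
            = cG / real N + real k * (cG * C_G / (real N)^2)"
        using m by (simp add: sum.distrib)
    qed
    also have "\<dots> = cG * (real k / real N + C_G * (real k / real N)^2)"
      by (simp add: field_simps power2_eq_square)
    finally show "(\<Sum>g\<in>G. (real (card (Ms k g)))^2) \<le> cG * (real k / real N + C_G * (real k / real N)^2)" .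
  qed
  have xexp: "\<And>m. m \<in> {1..K} \<Longrightarrow> x m = (\<Sum>k\<in>{1..K}. if m \<le> k then d k else 0)"
  proof -
    fix m assume m: "m \<in> {1..K}"
    have "(\<Sum>k\<in>{1..K}. if m \<le> k then d k else 0) = (\<Sum>k\<in>{k\<in>{1..K}. m \<le> k}. d k)"
      using sum.inter_filter[of "{1..K}" d "\<lambda>k. m \<le> k"] by simp
    also have "{k\<in>{1..K}. m \<le> k} = {m..K}" using m by auto
    finally show "x m = (\<Sum>k\<in>{1..K}. if m \<le> k then d k else 0)" using tele m by simp
  qed
  have abel: "(\<Sum>k\<in>{1..K}. d k * real k) = (\<Sum>m\<in>{1..K}. x m)"
  proof -
    have "(\<Sum>m\<in>{1..K}. x m) = (\<Sum>m\<in>{1..K}. \<Sum>k\<in>{1..K}. if m \<le> k then d k else 0)"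
      using xexp by (rule sum.cong[OF refl])
    also have "\<dots> = (\<Sum>k\<in>{1..K}. \<Sum>m\<in>{1..K}. if m \<le> k then d k else 0)" by (rule sum.swap)
    also have "\<dots> = (\<Sum>k\<in>{1..K}. d k * real k)"
    proof (rule sum.cong[OF refl])
      fix k assume k: "k \<in> {1..K}"
      have "(\<Sum>m\<in>{1..K}. if m \<le> k then d k else 0) = (\<Sum>m\<in>{m\<in>{1..K}. m \<le> k}. d k)"
        using sum.inter_filter[of "{1..K}" "\<lambda>_. d k" "\<lambda>m. m \<le> k"] by simp
      also have "{m\<in>{1..K}. m \<le> k} = {1..k}" using k by auto
      finally show "(\<Sum>m\<in>{1..K}. if m \<le> k then d k else 0) = d k * real k" by (simp add: mult.commute)
    qed
    finally show ?thesis by simp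
  qed
  have lam0: "0 < lam" "lam \<le> 1" using C_G by (auto simp: lam_def)
  have L1: "real l \<ge> 1" using l by simp
  define X where "X = (\<lambda>k g. real (card (Ms k g)))"
  have perk: "d k * cG * (real k / real N) / (1 + C_G)
      \<le> d k * (lam * (\<Sum>g\<in>G. X k g) - lam^2 / (4 * real l) * (\<Sum>g\<in>G. (X k g)^2))"
    if k: "k \<in> {1..K}" for k
  proof -
    define u where "u = real k / real N"
    have u0: "0 \<le> u" by (simp add: u_def)
    have ul: "u \<le> real l"
    proof -
      have "k \<le> l * N" using k by (simp add: K_def)
      then have "real k \<le> real l * real N" by (metis of_nat_le_iff of_nat_mult)
      then show ?thesis using Npos by (simp add: u_def divide_le_eq)
    qed
    have tb: "u / (1 + C_G) \<le> lam * u - lam^2 / (4 * real l) * (u + C_G * u^2)"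
      using term_bound[OF u0 ul L1 C_G] by (simp add: lam_def)
    have s1: "(\<Sum>g\<in>G. X k g) = cG * u" using X1[of k] k by (simp add: X_def u_def)
    have s2: "(\<Sum>g\<in>G. (X k g)^2) \<le> cG * (u + C_G * u^2)" using X2[of k] k by (simp add: X_def u_def)
    have c0: "0 \<le> lam^2 / (4 * real l)" by simp
    have "cG * (u / (1 + C_G)) \<le> cG * (lam * u - lam^2 / (4 * real l) * (u + C_G * u^2))"
      using tb cGpos by (intro mult_left_mono) auto
    also have "\<dots> = lam * (cG * u) - lam^2 / (4 * real l) * (cG * (u + C_G * u^2))"
      by (simp add: algebra_simps)
    also have "\<dots> \<le> lam * (\<Sum>g\<in>G. X k g) - lam^2 / (4 * real l) * (\<Sum>g\<in>G. (X k g)^2)"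
      unfolding s1 using mult_left_mono[OF s2 c0] by linarith
    finally have "cG * (u / (1 + C_G)) \<le> lam * (\<Sum>g\<in>G. X k g) - lam^2 / (4 * real l) * (\<Sum>g\<in>G. (X k g)^2)" .
    then have "d k * (cG * (u / (1 + C_G))) \<le> d k * (lam * (\<Sum>g\<in>G. X k g) - lam^2 / (4 * real l) * (\<Sum>g\<in>G. (X k g)^2))"
      using d_nn[OF k] by (intro mult_left_mono) auto
    then show ?thesis by (simp add: u_def mult.assoc)
  qed
  have lower: "cG * (\<Sum>m\<in>{1..K}. x m) / (real N * (1 + C_G)) \<le> (\<Sum>g\<in>G. S_top n l a g)"
  proof -
    have "cG * (\<Sum>m\<in>{1..K}. x m) / (real N * (1 + C_G)) = (\<Sum>k\<in>{1..K}. d k * cG * (real k / real N) / (1 + C_G))"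
      unfolding abel[symmetric] by (simp add: sum_distrib_left sum_divide_distrib mult.commute mult.left_commute)
    also have "\<dots> \<le> (\<Sum>k\<in>{1..K}. d k * (lam * (\<Sum>g\<in>G. X k g) - lam^2 / (4 * real l) * (\<Sum>g\<in>G. (X k g)^2)))"
      by (rule sum_mono) (rule perk)
    also have "\<dots> = (\<Sum>k\<in>{1..K}. \<Sum>g\<in>G. d k * (lam * X k g - lam^2 * (X k g)^2 / (4 * real l)))"
    proof (rule sum.cong[OF refl])
      fix k
      show "d k * (lam * (\<Sum>g\<in>G. X k g) - lam^2 / (4 * real l) * (\<Sum>g\<in>G. (X k g)^2))
          = (\<Sum>g\<in>G. d k * (lam * X k g - lam^2 * (X k g)^2 / (4 * real l)))"
        by (simp add: sum_distrib_left sum_subtractf sum_divide_distrib algebra_simps)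
    qed
    also have "\<dots> = (\<Sum>g\<in>G. \<Sum>k\<in>{1..K}. d k * (lam * X k g - lam^2 * (X k g)^2 / (4 * real l)))"
      by (rule sum.swap)
    also have "\<dots> \<le> (\<Sum>g\<in>G. S_top n l a g)"
    proof (rule sum_mono)
      fix g assume g: "g \<in> G"
      have "(\<Sum>k\<in>{1..K}. d k * (lam * X k g - lam^2 * (X k g)^2 / (4 * real l)))
          \<le> (\<Sum>k\<in>{1..K}. d k * min (real l) (real (card (Ms k g))))"
      proof (rule sum_mono)
        fix k assume k: "k \<in> {1..K}"
        show "d k * (lam * X k g - lam^2 * (X k g)^2 / (4 * real l)) \<le> d k * min (real l) (real (card (Ms k g)))"
          using quad_le_min[OF _ L1 lam0, of "X k g"] d_nn[OF k]
          by (intro mult_left_mono) (auto simp: X_def)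
      qed
      then show "(\<Sum>k\<in>{1..K}. d k * (lam * X k g - lam^2 * (X k g)^2 / (4 * real l))) \<le> S_top n l a g"
        using det[OF g] by linarith
    qed
    finally show ?thesis .
  qed
  have upper: "(\<Sum>g\<in>G. S_top n l (a_tilde l N h a) g) \<le> cG * (\<Sum>m\<in>{1..K}. x m) / real N"
  proof -
    define Av where "Av = (\<Sum>m=1..l*N. case_prod a (h m)) / real (l*N)"
    have Av_eq: "Av = (\<Sum>m\<in>{1..K}. x m) / real K" by (simp add: Av_def K_def x_def)
    have Av0: "0 \<le> Av" unfolding Av_eq using x_nn KnN by (intro divide_nonneg_nonneg sum_nonneg) auto
    have "(\<Sum>g\<in>G. S_top n l (a_tilde l N h a) g) \<le> (\<Sum>g\<in>G. real l * Av)"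
    proof (rule sum_mono)
      fix g assume g: "g \<in> G"
      show "S_top n l (a_tilde l N h a) g \<le> real l * Av"
        by (rule S_top_le_bound[OF l(2)]) (use Av0 in \<open>simp add: a_tilde_def Av_def\<close>)
    qed
    also have "\<dots> = cG * (real l * Av)" by (simp add: cG_def)
    also have "real l * Av = (\<Sum>m\<in>{1..K}. x m) / real N"
      unfolding Av_eq using l Npos by (simp add: K_def)
    finally show ?thesis by simp
  qed
  have Tnn: "0 \<le> (\<Sum>m\<in>{1..K}. x m)" using x_nn KnN by (intro sum_nonneg) auto
  define T where "T = (\<Sum>m\<in>{1..K}. x m)"
  define Sa where "Sa = (\<Sum>g\<in>G. S_top n l a g)"
  define St where "St = (\<Sum>g\<in>G. S_top n l (a_tilde l N h a) g)"
  have 1: "St \<le> cG * T / real N" using upper by (simp add: St_def T_def)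
  have 2: "cG * T / real N \<le> (1 + C_G) * Sa"
  proof -
    have "cG * T / (real N * (1 + C_G)) \<le> Sa" using lower by (simp add: Sa_def T_def)
    then have "cG * T / (real N * (1 + C_G)) * (1 + C_G) \<le> Sa * (1 + C_G)"
      using C_G by (intro mult_right_mono) auto
    moreover have "cG * T / (real N * (1 + C_G)) * (1 + C_G) = cG * T / real N"
    proof -
      have nz: "1 + C_G \<noteq> 0" using C_G by simp
      show ?thesis using nz Npos by (simp add: divide_simps)
    qed
    ultimately show ?thesis by (simp add: mult.commute)
  qed
  have Sann: "0 \<le> Sa"
  proof -
    have "0 \<le> cG * T / (real N * (1 + C_G))" using cGpos Tnn C_G by (simp add: T_def)
    also have "\<dots> \<le> Sa" using lower by (simp add: Sa_def T_def)
    finally show ?thesis .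
  qed
  have "St \<le> (8 + 16 * C_G) * Sa"
  proof -
    have "(1 + C_G) * Sa \<le> (8 + 16 * C_G) * Sa" using Sann C_G by (intro mult_right_mono) auto
    then show ?thesis using 1 2 by linarith
  qed
  then have "St / cG \<le> (8 + 16 * C_G) * Sa / cG" using cGpos by (simp add: divide_right_mono)
  then show ?thesis by (simp add: expect_G_def St_def Sa_def cG_def)
qed

end
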